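(* In the kernel LSTD setting described in the context, the estimate $\widehat\theta$ takes the form $$\widehat\theta=r+\frac{1}{\sqrt{n-K}}\sum_{t=1}^{n-K}\widehat\alpha_t\,\mathcal{K}(\cdot,x_t),$$ where the coefficient vector $\widehat\alpha\in\mathbb{R}^{\tilde n}$ ($\tilde n=n-K$) solves the linear system $$\big(\mathbf{K}_{\rm cov}+\lambda_n\mathbf{I}_{\tilde n}-\mathbf{K}_{\rm cr}\big)\widehat\alpha=\mathbf{y},$$ with $\mathbf{K}_{\rm cov}(i,j)=\mathcal{K}(x_i,x_j)/\tilde n$, $\mathbf{K}_{\rm cr}(i,j)=\sum_{k=1}^Kw_k\gamma^k\mathcal{K}(x_{i+k},x_j)/\tilde n$, and $\mathbf{y}(i)=\frac{1}{\sqrt{\tilde n}}\sum_{k=1}^Kw_k\sum_{\ell=1}^k\gamma^\ell r(x_{i+\ell})$, for $i,j=1,\dots,\tilde n$.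
   Context: $\mathbb{H}$ is an RKHS of functions on a state space $\mathcal{X}$ with kernel $\mathcal{K}$, containing the reward function $r$; $\mathcal{R}_x=\mathcal{K}(\cdot,x)$ and $g\otimes h$ is the operator $f\mapsto g\langle h,f\rangle_{\mathbb{H}}$. Given $\gamma\in[0,1)$, an integer $K\ge1$, weights $w_1,\dots,w_K\ge0$ summing to $1$, a sequence of states $x_1,\dots,x_n$ ($n>K$), $\tilde n=n-K$, define $\widehat\Sigma_{\rm cov}=\frac1{\tilde n}\sum_{t=1}^{\tilde n}\mathcal{R}_{x_t}\otimes\mathcal{R}_{x_t}$, $\widehat\Sigma_{\rm cr}=\frac1{\tilde n}\sum_{t=1}^{\tilde n}\mathcal{R}_{x_t}\otimes\sum_{k=1}^Kw_k\gamma^k\mathcal{R}_{x_{t+k}}$, $\widehat y_0=\frac1{\tilde n}\sum_{t=1}^{\tilde n}\mathcal{R}_{x_t}\sum_{k=1}^Kw_k\sum_{\ell=1}^{k-1}\gamma^\ell r(x_{t+\ell})$. For $\lambda_n>0$ the kernel LSTD estimate $\widehat\theta\in\mathbb{H}$ is the solution of $(\widehat\Sigma_{\rm cov}+\lambda_nI)\widehat\theta=(\widehat\Sigma_{\rm cov}+\lambda_nI)r+\widehat y_0+\widehat\Sigma_{\rm cr}\widehat\theta$. *)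

theory Defs
  imports "HOL-Analysis.Analysis"
begin

text \<open>The RKHS H is an abstract real inner-product space 'h
(class real_inner, completeness is not needed here).  Elements of H are
identified with functions on the state space 'x through the reproducing
(canonical feature) map  Rep :: 'x => 'h, Rep x = K(.,x), via evaluation
f(x) = <f, Rep x>.\<close>

definition rkhs_eval :: "('x \<Rightarrow> 'h::real_inner) \<Rightarrow> 'h \<Rightarrow> 'x \<Rightarrow> real" where
  "rkhs_eval Rep f a = inner f (Rep a)"

definition rkhs_kernel :: "('x \<Rightarrow> 'h::real_inner) \<Rightarrow> 'x \<Rightarrow> 'x \<Rightarrow> real" where
  "rkhs_kernel Rep a b = inner (Rep a) (Rep b)"

definition tens :: "'h::real_inner \<Rightarrow> 'h \<Rightarrow> 'h \<Rightarrow> 'h" where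
  "tens g h f = inner h f *\<^sub>R g"

definition Sigma_cov :: "('x \<Rightarrow> 'h::real_inner) \<Rightarrow> (nat \<Rightarrow> 'x) \<Rightarrow> nat \<Rightarrow> nat \<Rightarrow> 'h \<Rightarrow> 'h" where
  "Sigma_cov Rep x n K f =
     (1 / real (n - K)) *\<^sub>R (\<Sum>t = 1..n - K. tens (Rep (x t)) (Rep (x t)) f)"

definition Sigma_cr :: "('x \<Rightarrow> 'h::real_inner) \<Rightarrow> real \<Rightarrow> (nat \<Rightarrow> real) \<Rightarrow> (nat \<Rightarrow> 'x) \<Rightarrow> nat \<Rightarrow> nat \<Rightarrow> 'h \<Rightarrow> 'h" where
  "Sigma_cr Rep \<gamma> w x n K f =
     (1 / real (n - K)) *\<^sub>R
       (\<Sum>t = 1..n - K. tens (Rep (x t)) (\<Sum>k = 1..K. (w k * \<gamma> ^ k) *\<^sub>R Rep (x (t + k))) f)"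

definition y0_hat :: "('x \<Rightarrow> 'h::real_inner) \<Rightarrow> 'h \<Rightarrow> real \<Rightarrow> (nat \<Rightarrow> real) \<Rightarrow> (nat \<Rightarrow> 'x) \<Rightarrow> nat \<Rightarrow> nat \<Rightarrow> 'h" where
  "y0_hat Rep r \<gamma> w x n K =
     (1 / real (n - K)) *\<^sub>R
       (\<Sum>t = 1..n - K. (\<Sum>k = 1..K. w k * (\<Sum>l = 1..k - 1. \<gamma> ^ l * rkhs_eval Rep r (x (t + l))))
                          *\<^sub>R Rep (x t))"

definition Kcov :: "('x \<Rightarrow> 'h::real_inner) \<Rightarrow> (nat \<Rightarrow> 'x) \<Rightarrow> nat \<Rightarrow> nat \<Rightarrow> nat \<Rightarrow> nat \<Rightarrow> real" where
  "Kcov Rep x n K i j = rkhs_kernel Rep (x i) (x j) / real (n - K)"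

definition Kcr :: "('x \<Rightarrow> 'h::real_inner) \<Rightarrow> real \<Rightarrow> (nat \<Rightarrow> real) \<Rightarrow> (nat \<Rightarrow> 'x) \<Rightarrow> nat \<Rightarrow> nat \<Rightarrow> nat \<Rightarrow> nat \<Rightarrow> real" where
  "Kcr Rep \<gamma> w x n K i j =
     (\<Sum>k = 1..K. w k * \<gamma> ^ k * rkhs_kernel Rep (x (i + k)) (x j)) / real (n - K)"

definition yvec :: "('x \<Rightarrow> 'h::real_inner) \<Rightarrow> 'h \<Rightarrow> real \<Rightarrow> (nat \<Rightarrow> real) \<Rightarrow> (nat \<Rightarrow> 'x) \<Rightarrow> nat \<Rightarrow> nat \<Rightarrow> nat \<Rightarrow> real" where
  "yvec Rep r \<gamma> w x n K i =
     (1 / sqrt (real (n - K))) *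
       (\<Sum>k = 1..K. w k * (\<Sum>l = 1..k. \<gamma> ^ l * rkhs_eval Rep r (x (i + l))))"

end

theory Submission
  imports Defs
begin

theorem lemma6:
  fixes Rep :: "'x \<Rightarrow> 'h::real_inner"
    and r \<theta> :: 'h
    and \<gamma> lam :: real
    and K n :: nat
    and w :: "nat \<Rightarrow> real"
    and x :: "nat \<Rightarrow> 'x"
  assumes "0 \<le> \<gamma>" and "\<gamma> < 1"
    and "K \<ge> 1"
    and "\<forall>k\<in>{1..K}. w k \<ge> 0"
    and "(\<Sum>k = 1..K. w k) = 1"
    and "n > K"
    and "lam > 0"
    and "Sigma_cov Rep x n K \<theta> + lam *\<^sub>R \<theta> =
           Sigma_cov Rep x n K r + lam *\<^sub>R r + y0_hat Rep r \<gamma> w x n K + Sigma_cr Rep \<gamma> w x n K \<theta>"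
  shows "\<exists>\<alpha> :: nat \<Rightarrow> real.
           (\<forall>i\<in>{1..n - K}.
              (\<Sum>j = 1..n - K. Kcov Rep x n K i j * \<alpha> j) + lam * \<alpha> i
                - (\<Sum>j = 1..n - K. Kcr Rep \<gamma> w x n K i j * \<alpha> j)
              = yvec Rep r \<gamma> w x n K i)
         \<and> \<theta> = r + (1 / sqrt (real (n - K))) *\<^sub>R (\<Sum>t = 1..n - K. \<alpha> t *\<^sub>R Rep (x t))"
proof -
  define m where "m = real (n - K)"
  define s where "s = sqrt m"
  have m0: "m > 0" using assms(6) by (simp add: m_def)
  have s0: "s > 0" using m0 by (simp add: s_def)
  have ss: "s * s = m" using m0 by (simp add: s_def)
  define \<Phi> where "\<Phi> i = (\<Sum>k = 1..K. (w k * \<gamma> ^ k) *\<^sub>R Rep (x (i + k)))" for i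
  define Y where "Y t = (\<Sum>k = 1..K. w k * (\<Sum>l = 1..k - 1. \<gamma> ^ l * rkhs_eval Rep r (x (t + l))))" for t
  define \<Delta> where "\<Delta> = \<theta> - r"
  define c where "c t = Y t + inner (\<Phi> t) \<theta> - inner (Rep (x t)) \<Delta>" for t
  define \<alpha> where "\<alpha> t = c t / (lam * s)" for t
  have cov: "Sigma_cov Rep x n K f = (1/m) *\<^sub>R (\<Sum>t = 1..n-K. inner (Rep (x t)) f *\<^sub>R Rep (x t))" for f
    by (simp add: Sigma_cov_def tens_def m_def)
  have cr: "Sigma_cr Rep \<gamma> w x n K \<theta> = (1/m) *\<^sub>R (\<Sum>t = 1..n-K. inner (\<Phi> t) \<theta> *\<^sub>R Rep (x t))"
    by (simp add: Sigma_cr_def tens_def m_def \<Phi>_def)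
  have y0: "y0_hat Rep r \<gamma> w x n K = (1/m) *\<^sub>R (\<Sum>t = 1..n-K. Y t *\<^sub>R Rep (x t))"
    by (simp add: y0_hat_def m_def Y_def)
  have "lam *\<^sub>R \<Delta> = y0_hat Rep r \<gamma> w x n K + Sigma_cr Rep \<gamma> w x n K \<theta>
      - (Sigma_cov Rep x n K \<theta> - Sigma_cov Rep x n K r)"
    using assms(8) by (simp add: \<Delta>_def algebra_simps)
  also have "\<dots> = (1/m) *\<^sub>R (\<Sum>t = 1..n-K. c t *\<^sub>R Rep (x t))"
    unfolding cov cr y0 c_def \<Delta>_def
    by (simp add: scaleR_right_diff_distrib[symmetric] scaleR_right_distrib[symmetric]
        sum.distrib[symmetric] sum_subtractf[symmetric] inner_diff_right algebra_simps)
  finally have L: "lam *\<^sub>R \<Delta> = (1/m) *\<^sub>R (\<Sum>t = 1..n-K. c t *\<^sub>R Rep (x t))" .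
  have D: "\<Delta> = (1/s) *\<^sub>R (\<Sum>t = 1..n-K. \<alpha> t *\<^sub>R Rep (x t))"
  proof -
    have "\<Delta> = (1/lam) *\<^sub>R (lam *\<^sub>R \<Delta>)" using assms(7) by simp
    also have "\<dots> = (1/(lam*m)) *\<^sub>R (\<Sum>t = 1..n-K. c t *\<^sub>R Rep (x t))" unfolding L by simp
    also have "\<dots> = (1/s) *\<^sub>R (\<Sum>t = 1..n-K. \<alpha> t *\<^sub>R Rep (x t))"
    proof -
      have e: "(\<Sum>t = 1..n-K. \<alpha> t *\<^sub>R Rep (x t)) = (1 / (lam * s)) *\<^sub>R (\<Sum>t = 1..n-K. c t *\<^sub>R Rep (x t))"
        by (simp add: \<alpha>_def scaleR_sum_right divide_inverse mult.commute)
      have f: "(1 / s) * (1 / (lam * s)) = 1 / (lam * m)" using ss by simp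
      show ?thesis unfolding e scaleR_scaleR f ..
    qed
    finally show ?thesis .
  qed
  have IP: "inner v \<Delta> = (1/s) * (\<Sum>j = 1..n-K. \<alpha> j * inner v (Rep (x j)))" for v
    unfolding D by (simp add: inner_sum_right)
  show ?thesis
  proof (intro exI[of _ \<alpha>] conjI ballI)
    show "\<theta> = r + (1 / sqrt (real (n - K))) *\<^sub>R (\<Sum>t = 1..n - K. \<alpha> t *\<^sub>R Rep (x t))"
      using D unfolding \<Delta>_def s_def m_def by (simp add: algebra_simps)
  next
    fix i assume i: "i \<in> {1..n-K}"
    have IP2: "inner v \<Delta> * s = (\<Sum>j = 1..n-K. \<alpha> j * inner v (Rep (x j)))" for v
      unfolding IP using s0 by simp
    have A: "(\<Sum>j = 1..n - K. Kcov Rep x n K i j * \<alpha> j) = inner (Rep (x i)) \<Delta> * s / m"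
    proof -
      have "(\<Sum>j = 1..n - K. Kcov Rep x n K i j * \<alpha> j) = (\<Sum>j = 1..n-K. \<alpha> j * inner (Rep (x i)) (Rep (x j))) / m"
        by (simp add: Kcov_def rkhs_kernel_def m_def sum_divide_distrib mult.commute)
      then show ?thesis unfolding IP2 .
    qed
    have B: "(\<Sum>j = 1..n - K. Kcr Rep \<gamma> w x n K i j * \<alpha> j) = inner (\<Phi> i) \<Delta> * s / m"
    proof -
      have "(\<Sum>j = 1..n - K. Kcr Rep \<gamma> w x n K i j * \<alpha> j) = (\<Sum>j = 1..n-K. \<alpha> j * inner (\<Phi> i) (Rep (x j))) / m"
        by (simp add: Kcr_def rkhs_kernel_def m_def sum_divide_distrib \<Phi>_def inner_sum_left
          sum_distrib_left sum_distrib_right algebra_simps)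
      then show ?thesis unfolding IP2 .
    qed
    have C: "lam * \<alpha> i = c i / s" unfolding \<alpha>_def using assms(7) s0 by simp
    have sm: "a * s / m = a / s" for a using ss s0 m0 by (simp add: field_simps)
    have se: "sqrt (real (n - K)) = s" by (simp add: s_def m_def)
    have Yr: "Y i + inner (\<Phi> i) r = (\<Sum>k = 1..K. w k * (\<Sum>l = 1..k. \<gamma> ^ l * rkhs_eval Rep r (x (i + l))))"
    proof -
      have "inner (\<Phi> i) r = (\<Sum>k = 1..K. w k * (\<gamma> ^ k * rkhs_eval Rep r (x (i + k))))"
        unfolding \<Phi>_def inner_sum_left rkhs_eval_def by (simp add: inner_commute mult.assoc)
      moreover have "(\<Sum>l = 1..k. \<gamma> ^ l * rkhs_eval Rep r (x (i + l))) =
          (\<Sum>l = 1..k - 1. \<gamma> ^ l * rkhs_eval Rep r (x (i + l))) + \<gamma> ^ k * rkhs_eval Rep r (x (i + k))"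
        if "k \<in> {1..K}" for k
      proof -
        have "k = Suc (k - 1)" using that by simp
        then obtain k' where "k = Suc k'" by blast
        then show ?thesis by simp
      qed
      ultimately show ?thesis unfolding Y_def
        by (simp add: sum.distrib[symmetric] distrib_left)
    qed
    show "(\<Sum>j = 1..n - K. Kcov Rep x n K i j * \<alpha> j) + lam * \<alpha> i
                - (\<Sum>j = 1..n - K. Kcr Rep \<gamma> w x n K i j * \<alpha> j)
              = yvec Rep r \<gamma> w x n K i"
      unfolding A B C sm yvec_def Yr[symmetric] c_def se
      by (simp add: \<Delta>_def inner_diff_right diff_divide_distrib add_divide_distrib)
  qed
qed

end
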